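(* As formal power series in $z$ (with coefficients rational functions of $q,s$), $$\sum_{n\ge0}\frac{r_{2n}(s,q)}{(q^2;q^2)_n}z^n=\frac{e_{q^2}(s^2z)\,e_{q^2}(z)}{e_q(-sz)},\qquad \sum_{n\ge0}\frac{r_{2n+1}(s,q)}{(q^2;q^2)_n}z^n=(1+s)\frac{e_{q^2}(s^2z)\,e_{q^2}(z)}{e_q(-qsz)}.$$
   Context: $q$ is an indeterminate (or a real number with $|q|<1$). $(x;q)_n=\prod_{j=0}^{n-1}(1-q^jx)$. The Gaussian binomial coefficient is $\begin{bmatrix} n\\ j\end{bmatrix}_q=\frac{(q;q)_n}{(q;q)_j(q;q)_{n-j}}$ for $0\le j\le n$ and $0$ otherwise. The Rogers–Szegö polynomials are $r_n(s,q)=\sum_{j=0}^n\begin{bmatrix} n\\ j\end{bmatrix}_q s^j$. $e_q(w)=\sum_{n\ge0}\frac{w^n}{(q;q)_n}$ as a formal power series, and $1/e_q(w)$ denotes its formal reciprocal. *)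

theory Defs
  imports "HOL-Computational_Algebra.Formal_Power_Series"
begin

definition qpoch :: "'a::comm_ring_1 \<Rightarrow> 'a \<Rightarrow> nat \<Rightarrow> 'a" where
  "qpoch x q n = (\<Prod>j<n. 1 - q ^ j * x)"

definition gauss_binom :: "'a::field \<Rightarrow> nat \<Rightarrow> nat \<Rightarrow> 'a" where
  "gauss_binom q n j =
     (if j \<le> n then qpoch q q n / (qpoch q q j * qpoch q q (n - j)) else 0)"

definition rogers_szego :: "nat \<Rightarrow> 'a::field \<Rightarrow> 'a \<Rightarrow> 'a" where
  "rogers_szego n s q = (\<Sum>j\<le>n. gauss_binom q n j * s ^ j)"

definition e_q :: "'a::field \<Rightarrow> 'a fps" where
  "e_q q = Abs_fps (\<lambda>n. 1 / qpoch q q n)"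

definition e_q_at :: "'a::field \<Rightarrow> 'a \<Rightarrow> 'a fps" where
  "e_q_at q c = fps_compose (e_q q) (fps_const c * fps_X)"

end

theory Submission
  imports Defs
begin


lemma qpoch_Suc: "qpoch x q (Suc n) = qpoch x q n * (1 - q^n * x)"
  by (simp add: qpoch_def lessThan_Suc mult.commute)

lemma qpoch_0[simp]: "qpoch x q 0 = 1" by (simp add: qpoch_def)

lemma qpoch_nz:
  fixes q :: "'a::field"
  assumes "\<forall>k::nat. k \<ge> 1 \<longrightarrow> q ^ k \<noteq> 1"
  shows "qpoch q q n \<noteq> 0"
proof -
  have "\<forall>j. 1 - q^j * q \<noteq> 0"
  proof
    fix j have "Suc j \<ge> 1" by simp
    hence "q^(Suc j) \<noteq> 1" using assms by blast
    thus "1 - q^j * q \<noteq> 0" by (simp add: mult.commute)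
  qed
  thus ?thesis by (simp add: qpoch_def)
qed

lemma one_minus_pow_nz:
  fixes q :: "'a::field"
  assumes "\<forall>k::nat. k \<ge> 1 \<longrightarrow> q ^ k \<noteq> 1"
  shows "1 - q^(Suc n) \<noteq> 0"
  using assms by (metis eq_iff_diff_eq_0 le_add1 plus_1_eq_Suc)

lemma gb0:
  fixes q :: "'a::field"
  assumes "\<forall>k::nat. k \<ge> 1 \<longrightarrow> q ^ k \<noteq> 1"
  shows "gauss_binom q n 0 = 1" "gauss_binom q n n = 1"
  using qpoch_nz[OF assms] by (simp_all add: gauss_binom_def)

lemma gb_pascal:
  fixes q :: "'a::field"
  assumes A: "\<forall>k::nat. k \<ge> 1 \<longrightarrow> q ^ k \<noteq> 1"
  shows "gauss_binom q (Suc n) (Suc j) = gauss_binom q n j + q^(Suc j) * gauss_binom q n (Suc j)"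
proof (cases "j < n")
  case True
  define d where "d = n - Suc j"
  have n: "n = j + d + 1" using True d_def by simp
  note nz = qpoch_nz[OF A] one_minus_pow_nz[OF A]
  have e1: "qpoch q q (Suc j) = qpoch q q j * (1 - q^(Suc j))" by (simp add: qpoch_Suc mult.commute)
  have e2: "qpoch q q (Suc d) = qpoch q q d * (1 - q^(Suc d))" by (simp add: qpoch_Suc mult.commute)
  have e3: "qpoch q q (Suc (j+d+1)) = qpoch q q (j+d+1) * (1 - q^(Suc j) * q^(Suc d))"
    by (simp add: qpoch_Suc power_add mult_ac)
  have lhs: "gauss_binom q (Suc n) (Suc j) = qpoch q q (Suc (j+d+1)) / (qpoch q q (Suc j) * qpoch q q (Suc d))"
    by (simp add: gauss_binom_def n)
  have r1: "gauss_binom q n j = qpoch q q (j+d+1) / (qpoch q q j * qpoch q q (Suc d))"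
    by (simp add: gauss_binom_def n)
  have r2: "gauss_binom q n (Suc j) = qpoch q q (j+d+1) / (qpoch q q (Suc j) * qpoch q q d)"
    by (simp add: gauss_binom_def n)
  have gen: "\<And>a b c x y::'a. a \<noteq> 0 \<Longrightarrow> b \<noteq> 0 \<Longrightarrow> 1 - x \<noteq> 0 \<Longrightarrow> 1 - y \<noteq> 0 \<Longrightarrow>
     c*(1-x*y)/((a*(1-x))*(b*(1-y))) = c/(a*(b*(1-y))) + x*(c/((a*(1-x))*b))"
  proof -
    fix a b c x y :: 'a assume h: "a \<noteq> 0" "b \<noteq> 0" "1 - x \<noteq> 0" "1 - y \<noteq> 0"
    have "c/(a*(b*(1-y))) + x*(c/((a*(1-x))*b)) = (c*(1-x) + x*c*(1-y))/((a*(1-x))*(b*(1-y)))"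
      using h by (simp add: add_divide_distrib)
    also have "c*(1-x) + x*c*(1-y) = c*(1-x*y)" by (simp add: algebra_simps)
    finally show "c*(1-x*y)/((a*(1-x))*(b*(1-y))) = c/(a*(b*(1-y))) + x*(c/((a*(1-x))*b))" by simp
  qed
  show ?thesis unfolding lhs r1 r2 e1 e2 e3
    using gen[OF nz(1)[of j] nz(1)[of d] nz(2)[of j] nz(2)[of d]] by simp
next
  case False
  then show ?thesis using gb0[OF A] by (cases "j = n") (auto simp: gauss_binom_def)
qed

lemma gb_absorb:
  fixes q :: "'a::field"
  assumes A: "\<forall>k::nat. k \<ge> 1 \<longrightarrow> q ^ k \<noteq> 1"
  shows "(1 - q^(Suc j)) * gauss_binom q (Suc n) (Suc j) = (1 - q^(Suc n)) * gauss_binom q n j"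
proof (cases "j \<le> n")
  case True
  note nz = qpoch_nz[OF A] one_minus_pow_nz[OF A]
  have e1: "qpoch q q (Suc j) = qpoch q q j * (1 - q^(Suc j))" by (simp add: qpoch_Suc mult.commute)
  have e3: "qpoch q q (Suc n) = qpoch q q n * (1 - q^(Suc n))" by (simp add: qpoch_Suc mult.commute)
  show ?thesis using True unfolding gauss_binom_def
    using nz(1)[of j] nz(1)[of "n-j"] nz(2)[of j] nz(1)[of n]
    by (simp add: e1 e3 field_simps)
next
  case False then show ?thesis by (simp add: gauss_binom_def)
qed


lemma rs_step1:
  fixes q s :: "'a::field"
  assumes A: "\<forall>k::nat. k \<ge> 1 \<longrightarrow> q ^ k \<noteq> 1"
  shows "rogers_szego (Suc m) s q = s * rogers_szego m s q + (\<Sum>j\<le>m. q^j * gauss_binom q m j * s^j)"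
proof -
  define f where "f j = q^j * gauss_binom q m j * s^j" for j
  have f0: "f 0 = 1" using gb0[OF A] by (simp add: f_def)
  have fS: "f (Suc m) = 0" by (simp add: f_def gauss_binom_def)
  have "(\<Sum>j\<le>Suc m. f j) = f 0 + (\<Sum>j\<le>m. f (Suc j))" by (rule sum.atMost_Suc_shift)
  moreover have "(\<Sum>j\<le>Suc m. f j) = (\<Sum>j\<le>m. f j)" using fS by simp
  ultimately have sh: "(\<Sum>j\<le>m. f (Suc j)) = (\<Sum>j\<le>m. f j) - 1" using f0 by (simp add: eq_diff_eq add.commute)
  have "rogers_szego (Suc m) s q = gauss_binom q (Suc m) 0 * s^0 + (\<Sum>j\<le>m. gauss_binom q (Suc m) (Suc j) * s^(Suc j))"
    unfolding rogers_szego_def by (rule sum.atMost_Suc_shift)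
  also have "\<dots> = 1 + (\<Sum>j\<le>m. s * (gauss_binom q m j * s^j) + f (Suc j))"
    using gb0[OF A] by (simp add: gb_pascal[OF A] f_def algebra_simps)
  also have "\<dots> = 1 + s * rogers_szego m s q + (\<Sum>j\<le>m. f (Suc j))"
    by (simp add: sum.distrib sum_distrib_left rogers_szego_def)
  finally show ?thesis using sh by (simp add: f_def)
qed

lemma rs_step2:
  fixes q s :: "'a::field"
  assumes A: "\<forall>k::nat. k \<ge> 1 \<longrightarrow> q ^ k \<noteq> 1"
  shows "rogers_szego (Suc m) s q - (\<Sum>j\<le>Suc m. q^j * gauss_binom q (Suc m) j * s^j)
     = s * (1 - q^(Suc m)) * rogers_szego m s q"
proof -
  define f where "f j = (1 - q^j) * gauss_binom q (Suc m) j * s^j" for j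
  have "rogers_szego (Suc m) s q - (\<Sum>j\<le>Suc m. q^j * gauss_binom q (Suc m) j * s^j) = (\<Sum>j\<le>Suc m. f j)"
    unfolding rogers_szego_def f_def by (simp add: sum_subtractf[symmetric] algebra_simps)
  also have "\<dots> = f 0 + (\<Sum>j\<le>m. f (Suc j))" by (rule sum.atMost_Suc_shift)
  also have "\<dots> = (\<Sum>j\<le>m. s * (1 - q^(Suc m)) * (gauss_binom q m j * s^j))"
  proof -
    have h: "f (Suc j) = s * (1 - q^(Suc m)) * (gauss_binom q m j * s^j)" for j
    proof -
      have "f (Suc j) = s * ((1 - q^(Suc j)) * gauss_binom q (Suc m) (Suc j)) * s^j"
        unfolding f_def by (simp only: power_Suc[of s]) (simp add: algebra_simps)
      also have "\<dots> = s * ((1 - q^(Suc m)) * gauss_binom q m j) * s^j" by (simp only: gb_absorb[OF A])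
      finally show ?thesis by (simp add: algebra_simps)
    qed
    have "f 0 = 0" by (simp add: f_def)
    thus ?thesis using h by simp
  qed
  also have "\<dots> = s * (1 - q^(Suc m)) * rogers_szego m s q"
    by (simp add: sum_distrib_left rogers_szego_def)
  finally show ?thesis .
qed

lemma rs_rec:
  fixes q s :: "'a::field"
  assumes A: "\<forall>k::nat. k \<ge> 1 \<longrightarrow> q ^ k \<noteq> 1"
  shows "rogers_szego (n+2) s q = (1+s) * rogers_szego (n+1) s q - s * (1 - q^(n+1)) * rogers_szego n s q"
  using rs_step1[OF A, of "Suc n" s] rs_step2[OF A, of n s]
  by (simp add: algebra_simps)

lemma rs_01:
  fixes q s :: "'a::field"
  assumes A: "\<forall>k::nat. k \<ge> 1 \<longrightarrow> q ^ k \<noteq> 1"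
  shows "rogers_szego 0 s q = 1" "rogers_szego 1 s q = 1 + s"
  using gb0[OF A, of 0] gb0[OF A, of 1] by (simp_all add: rogers_szego_def)

lemma rs_rec2:
  fixes q s :: "'a::field"
  assumes A: "\<forall>k::nat. k \<ge> 1 \<longrightarrow> q ^ k \<noteq> 1"
  shows "rogers_szego (m+4) s q = (1 + s^2 + s * q^(m+1) * q * (1+q)) * rogers_szego (m+2) s q
          - s^2 * (1 - q^(m+1)*q) * (1 - q^(m+1)) * rogers_szego m s q"
proof -
  define y where "y = q^(m+1)"
  have y2: "q^(m+2) = y*q" "q^(m+3) = y*q*q" unfolding y_def by (simp_all add: numeral_eq_Suc mult_ac)
  define R where "R k = rogers_szego k s q" for k
  have E1: "R (m+2) = (1+s) * R (m+1) - s * (1 - y) * R m" using rs_rec[OF A, of m s] by (simp add: R_def y_def)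
  have E2: "R (m+3) = (1+s) * R (m+2) - s * (1 - y*q) * R (m+1)"
    using rs_rec[OF A, of "m+1" s] y2 by (simp add: R_def numeral_eq_Suc)
  have E3: "R (m+4) = (1+s) * R (m+3) - s * (1 - y*q*q) * R (m+2)"
    using rs_rec[OF A, of "m+2" s] y2 by (simp add: R_def numeral_eq_Suc)
  have "R (m+4) - ((1 + s^2 + s * y * q * (1+q)) * R (m+2) - s^2 * (1 - y*q) * (1 - y) * R m)
     = (R (m+4) - ((1+s) * R (m+3) - s * (1 - y*q*q) * R (m+2)))
       + (1+s) * (R (m+3) - ((1+s) * R (m+2) - s * (1 - y*q) * R (m+1)))
       + s * (1 - y*q) * (R (m+2) - ((1+s) * R (m+1) - s * (1 - y) * R m))"
    by (simp add: algebra_simps power2_eq_square)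
  also have "\<dots> = 0" using E1 E2 E3 by simp
  finally show ?thesis by (simp add: R_def y_def)
qed




notation fps_nth (infixl "$$" 75)

definition sc :: "'a::comm_ring_1 \<Rightarrow> 'a fps \<Rightarrow> 'a fps" where
  "sc c f = Abs_fps (\<lambda>n. c^n * f $$ n)"

lemma sc_nth[simp]: "sc c f $$ n = c^n * f $$ n" by (simp add: sc_def)

lemma sc_mult: "sc c (f*g) = sc c f * sc c g"
proof (rule fps_ext)
  fix n
  have "sc c (f*g) $$ n = (\<Sum>i=0..n. c^i * f $$ i * (c^(n-i) * g $$ (n-i)))"
    by (simp add: fps_mult_nth sum_distrib_left)
       (rule sum.cong, simp, simp add: mult_ac power_add[symmetric])
  thus "sc c (f*g) $$ n = (sc c f * sc c g) $$ n" by (simp add: fps_mult_nth mult_ac)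
qed

lemma sc_diff: "sc c (f - g) = sc c f - sc c g"
  by (rule fps_ext) (simp add: algebra_simps)

lemma uniq:
  fixes c :: "'a::field"
  assumes A: "\<forall>n::nat. n \<ge> 1 \<longrightarrow> c^n \<noteq> 1"
    and f: "sc c f = f * M" and g: "sc c g = g * M" and M0: "M $$ 0 = 1" and fg: "f $$ 0 = g $$ 0"
  shows "f = g"
proof -
  define d where "d = f - g"
  have d: "sc c d = d * M" unfolding d_def sc_diff f g by (simp add: algebra_simps)
  have "d $$ n = 0" for n
  proof (induction n rule: less_induct)
    case (less n)
    show ?case
    proof (cases n)
      case 0 thus ?thesis using fg by (simp add: d_def)
    next
      case (Suc m)
      have "(d*M) $$ n = (\<Sum>i=0..m. d $$ i * M $$ (n-i)) + d $$ n * M $$ 0"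
        unfolding fps_mult_nth Suc by (simp add: sum.atLeast0_atMost_Suc)
      also have "(\<Sum>i=0..m. d $$ i * M $$ (n-i)) = 0" using less Suc by (intro sum.neutral) auto
      finally have "c^n * d $$ n = d $$ n" using d M0 by (metis add_0 fps_eq_iff mult.right_neutral sc_nth)
      hence "(c^n - 1) * d $$ n = 0" by (simp add: algebra_simps)
      moreover have "c^n - 1 \<noteq> 0" using A Suc by auto
      ultimately show ?thesis by simp
    qed
  qed
  thus ?thesis unfolding d_def by (simp add: fps_eq_iff)
qed

lemma eqat_nth: "e_q_at p c $$ n = c^n / qpoch p p n"
  by (simp add: e_q_at_def fps_compose_linear e_q_def)

lemma sc_eqat: "sc a (e_q_at p c) = e_q_at p (a*c)"
  by (rule fps_ext) (simp add: eqat_nth power_mult_distrib)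

lemma lin_nth: fixes f :: "'a::comm_ring_1 fps" shows "(f * (1 - fps_const c * fps_X)) $$ n = f $$ n - (if n = 0 then 0 else c * f $$ (n-1))"
proof -
  have "f * (1 - fps_const c * fps_X) = f - fps_const c * (f * fps_X)" by (simp add: algebra_simps)
  thus ?thesis by simp
qed

lemma eqat_shift:
  fixes p :: "'a::field"
  assumes A: "\<forall>k::nat. k \<ge> 1 \<longrightarrow> p ^ k \<noteq> 1"
  shows "e_q_at p (p*c) = e_q_at p c * (1 - fps_const c * fps_X)"
proof (rule fps_ext)
  fix n
  show "e_q_at p (p*c) $$ n = (e_q_at p c * (1 - fps_const c * fps_X)) $$ n"
  proof (cases n)
    case 0 thus ?thesis by (simp add: eqat_nth lin_nth)
  next
    case (Suc m)
    have e: "qpoch p p (Suc m) = qpoch p p m * (1 - p^(Suc m))" by (simp add: qpoch_Suc mult.commute)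
    have nz: "qpoch p p m \<noteq> 0" "1 - p^(Suc m) \<noteq> 0" using qpoch_nz[OF A] one_minus_pow_nz[OF A] by auto
    have "c^(Suc m)/(qpoch p p m * (1 - p^(Suc m))) - c * (c^m / qpoch p p m)
        = (c^(Suc m) - c^(Suc m) * (1 - p^(Suc m)))/(qpoch p p m * (1 - p^(Suc m)))"
      using nz by (simp add: diff_divide_distrib)
    also have "\<dots> = (p * c)^(Suc m)/(qpoch p p m * (1 - p^(Suc m)))"
      by (simp add: algebra_simps power_mult_distrib)
    finally show ?thesis using Suc by (simp add: eqat_nth lin_nth e)
  qed
qed

lemma quad_nth: fixes f :: "'a::comm_ring_1 fps" shows
  "(f * ((1 - fps_const a * fps_X) * (1 - fps_const b * fps_X))) $$ 0 = f $$ 0"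
  "(f * ((1 - fps_const a * fps_X) * (1 - fps_const b * fps_X))) $$ 1 = f $$ 1 - (a+b) * f $$ 0"
  "(f * ((1 - fps_const a * fps_X) * (1 - fps_const b * fps_X))) $$ (Suc (Suc k)) =
     f $$ (k+2) - (a+b) * f $$ (k+1) + a*b*f $$ k"
proof -
  have e: "f * ((1 - fps_const a * fps_X) * (1 - fps_const b * fps_X)) = 
     (f * (1 - fps_const a * fps_X)) * (1 - fps_const b * fps_X)" by (simp add: mult.assoc)
  show "(f * ((1 - fps_const a * fps_X) * (1 - fps_const b * fps_X))) $$ 0 = f $$ 0"
    unfolding e lin_nth by simp
  show "(f * ((1 - fps_const a * fps_X) * (1 - fps_const b * fps_X))) $$ 1 = f $$ 1 - (a+b) * f $$ 0"
    unfolding e lin_nth by (simp add: algebra_simps)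
  show "(f * ((1 - fps_const a * fps_X) * (1 - fps_const b * fps_X))) $$ (Suc (Suc k)) =
     f $$ (k+2) - (a+b) * f $$ (k+1) + a*b*f $$ k"
    unfolding e lin_nth by (simp add: algebra_simps)
qed




lemma alg_even:
  fixes u x q s a b c :: "'a::field"
  assumes u: "u \<noteq> 0" and d1: "1 - x*(q*q) \<noteq> 0" and d2: "1 - x*(q*q)*(q*q) \<noteq> 0"
    and c: "c = (1 + s^2 + s*(x*q)*q*(1+q))*b - s^2*(1 - x*q*q)*(1 - x*q)*a"
  shows "(x*(q*q)*(q*q)) * (c/(u*(1-x*(q*q))*(1-x*(q*q)*(q*q)))) - (-s + q*(-s))*((x*(q*q))*(b/(u*(1-x*(q*q)))))
     + (-s)*(q*(-s))*(x*(a/u)) = c/(u*(1-x*(q*q))*(1-x*(q*q)*(q*q))) - (s^2+1)*(b/(u*(1-x*(q*q)))) + s^2*1*(a/u)"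
proof -
  define C where "C = c/(u*(1-x*(q*q))*(1-x*(q*q)*(q*q)))"
  define B where "B = b/(u*(1-x*(q*q)))"
  define A where "A = a/u"
  have cC: "c = C*(u*(1-x*(q*q))*(1-x*(q*q)*(q*q)))" using u d1 d2 by (simp add: C_def)
  have bB: "b = B*(u*(1-x*(q*q)))" using u d1 by (simp add: B_def)
  have aA: "a = A*u" using u by (simp add: A_def)
  have "(C*(1-x*(q*q)*(q*q)) - ((1 + s^2 + s*(x*q)*q*(1+q))*B - s^2*(1 - x*q)*A)) * (u*(1-x*(q*q))) = 0"
    using c unfolding cC bB aA by (simp add: algebra_simps)
  hence h: "C*(1-x*(q*q)*(q*q)) = (1 + s^2 + s*(x*q)*q*(1+q))*B - s^2*(1 - x*q)*A" using u d1 by simp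
  show ?thesis unfolding C_def[symmetric] B_def[symmetric] A_def[symmetric]
    using h by (simp add: algebra_simps power2_eq_square)
qed

lemma alg_odd:
  fixes u x q s a b c :: "'a::field"
  assumes u: "u \<noteq> 0" and d1: "1 - x*(q*q) \<noteq> 0" and d2: "1 - x*(q*q)*(q*q) \<noteq> 0"
    and c: "c = (1 + s^2 + s*(x*q*q)*q*(1+q))*b - s^2*(1 - x*q*q*q)*(1 - x*q*q)*a"
  shows "(x*(q*q)*(q*q)) * (c/(u*(1-x*(q*q))*(1-x*(q*q)*(q*q)))) - (-q*s + q*(-q*s))*((x*(q*q))*(b/(u*(1-x*(q*q)))))
     + (-q*s)*(q*(-q*s))*(x*(a/u)) = c/(u*(1-x*(q*q))*(1-x*(q*q)*(q*q))) - (s^2+1)*(b/(u*(1-x*(q*q)))) + s^2*1*(a/u)"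
proof -
  define C where "C = c/(u*(1-x*(q*q))*(1-x*(q*q)*(q*q)))"
  define B where "B = b/(u*(1-x*(q*q)))"
  define A where "A = a/u"
  have cC: "c = C*(u*(1-x*(q*q))*(1-x*(q*q)*(q*q)))" using u d1 d2 by (simp add: C_def)
  have bB: "b = B*(u*(1-x*(q*q)))" using u d1 by (simp add: B_def)
  have aA: "a = A*u" using u by (simp add: A_def)
  have "(C*(1-x*(q*q)*(q*q)) - ((1 + s^2 + s*(x*q*q)*q*(1+q))*B - s^2*(1 - x*q*q*q)*A)) * (u*(1-x*(q*q))) = 0"
    using c unfolding cC bB aA by (simp add: algebra_simps)
  hence h: "C*(1-x*(q*q)*(q*q)) = (1 + s^2 + s*(x*q*q)*q*(1+q))*B - s^2*(1 - x*q*q*q)*A" using u d1 by simp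
  show ?thesis unfolding C_def[symmetric] B_def[symmetric] A_def[symmetric]
    using h by (simp add: algebra_simps power2_eq_square)
qed

lemma main_gen:
  fixes p :: "'a::field"
  assumes Ap: "\<forall>k::nat. k \<ge> 1 \<longrightarrow> p ^ k \<noteq> 1"
    and G: "sc p G * Q = G * M" and B: "sc p B = B * Q" and A: "sc p A = A * M"
    and M0: "M $$ 0 = 1" and B0: "B $$ 0 \<noteq> 0" and G0: "G $$ 0 * B $$ 0 = A $$ 0"
  shows "G = A / B"
proof -
  have "sc p (G*B) = (G*B) * M"
    by (simp only: sc_mult B mult.assoc[symmetric]) (metis G mult.assoc mult.commute)
  hence "G * B = A" using uniq[OF Ap _ A M0] G0 by simp
  moreover have "B \<noteq> 0" using B0 by auto
  ultimately show ?thesis by (metis fps_divide_times_eq)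
qed

lemma sc_one:
  fixes p :: "'a::field"
  assumes Ap: "\<forall>k::nat. k \<ge> 1 \<longrightarrow> p ^ k \<noteq> 1"
  shows "sc p (e_q_at p c) = e_q_at p c * (1 - fps_const c * fps_X)"
  by (simp only: sc_eqat eqat_shift[OF Ap])

lemma sc_two:
  fixes q :: "'a::field"
  assumes Aq: "\<forall>k::nat. k \<ge> 1 \<longrightarrow> q ^ k \<noteq> 1"
  shows "sc (q^2) (e_q_at q c) = e_q_at q c * ((1 - fps_const c * fps_X) * (1 - fps_const (q*c) * fps_X))"
proof -
  have "q^2*c = q*(q*c)" by (simp add: power2_eq_square)
  hence "sc (q^2) (e_q_at q c) = e_q_at q (q*(q*c))" by (simp only: sc_eqat)
  also have "\<dots> = e_q_at q c * (1 - fps_const c * fps_X) * (1 - fps_const (q*c) * fps_X)"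
    by (simp only: eqat_shift[OF Aq])
  finally show ?thesis by (simp only: mult.assoc)
qed




theorem lemma1p2:
  fixes q s :: "'a::field"
  assumes q_not_root_of_unity: "\<forall>k::nat. k \<ge> 1 \<longrightarrow> q ^ k \<noteq> 1"
  shows "(Abs_fps (\<lambda>n. rogers_szego (2 * n) s q / qpoch (q\<^sup>2) (q\<^sup>2) n)
           = e_q_at (q\<^sup>2) (s\<^sup>2) * e_q_at (q\<^sup>2) 1 / e_q_at q (- s)) \<and>
         (Abs_fps (\<lambda>n. rogers_szego (2 * n + 1) s q / qpoch (q\<^sup>2) (q\<^sup>2) n)
           = fps_const (1 + s) * (e_q_at (q\<^sup>2) (s\<^sup>2) * e_q_at (q\<^sup>2) 1 / e_q_at q (- q * s)))"
proof -
  note Aq = q_not_root_of_unity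
  have Ap: "\<forall>k::nat. k \<ge> 1 \<longrightarrow> (q^2) ^ k \<noteq> 1"
  proof (intro allI impI)
    fix k :: nat assume "k \<ge> 1"
    hence "2*k \<ge> 1" by simp
    thus "(q^2)^k \<noteq> 1" using Aq by (simp add: power_mult[symmetric])
  qed
  define R where "R k = rogers_szego k s q" for k
  define P where "P k = qpoch (q^2) (q^2) k" for k
  have Pnz: "P k \<noteq> 0" for k using qpoch_nz[OF Ap] by (simp add: P_def)
  have P1: "P (Suc k) = P k * (1 - (q^2)^k * (q*q))" for k
    by (simp add: P_def qpoch_Suc power2_eq_square)
  have d1: "1 - (q^2)^k * (q*q) \<noteq> 0" for k
    using one_minus_pow_nz[OF Ap, of k] by (simp add: power2_eq_square mult.commute)
  have d2: "1 - (q^2)^k * (q*q) * (q*q) \<noteq> 0" for k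
    using one_minus_pow_nz[OF Ap, of "Suc k"] by (simp add: power2_eq_square mult_ac)
  have P2: "P (k+2) = P k * (1 - (q^2)^k * (q*q)) * (1 - (q^2)^k * (q*q) * (q*q))" for k
    using P1[of "Suc k"] P1[of k] by (simp add: power2_eq_square mult_ac)
  have pw: "(q^2)^(k+2) = (q^2)^k * (q*q) * (q*q)" "(q^2)^(k+1) = (q^2)^k * (q*q)" for k :: nat
    by (simp_all add: power2_eq_square power_add mult_ac)
  have xq: "q^(2*k+1) = (q^2)^k * q" "q^(2*k+1+1) = (q^2)^k * q * q" for k :: nat
    by (simp_all add: power_add mult_ac flip: power_mult)
  have R23: "R (Suc (Suc 0)) = R 2" "R (Suc (Suc (Suc 0))) = R 3" by (simp_all add: numeral_eq_Suc)
  have Pone: "qpoch (q^2) (q^2) (Suc 0) = 1 - q*q" by (simp add: qpoch_Suc power2_eq_square)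
  have qx: "q^(2*k) = (q^2)^k" for k :: nat by (simp add: power_mult)
  note R01 = rs_01[OF Aq, of s, folded R_def]
  have R1': "R (Suc 0) = 1 + s" using R01 by simp
  have R2: "R 2 = (1+s)*(1+s) - s*(1-q)" using rs_rec[OF Aq, of 0 s] R01 by (simp add: R_def numeral_eq_Suc)
  have R3: "R 3 = (1+s)*R 2 - s*(1-q*q)*(1+s)" using rs_rec[OF Aq, of 1 s] R01
    by (simp add: R_def numeral_eq_Suc power2_eq_square)
  define M where "M = (1 - fps_const (s^2) * fps_X) * (1 - fps_const 1 * fps_X :: 'a fps)"
  define A where "A = e_q_at (q^2) (s^2) * e_q_at (q^2) 1"
  have scA: "sc (q^2) A = A * M"
    unfolding A_def M_def sc_mult sc_one[OF Ap] by (simp only: mult_ac)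
  have M0: "M $$ 0 = 1" by (simp add: M_def)
  have A0: "A $$ 0 = 1" by (simp add: A_def eqat_nth)
  define G where "G = Abs_fps (\<lambda>n. rogers_szego (2 * n) s q / qpoch (q\<^sup>2) (q\<^sup>2) n)"
  define B where "B = e_q_at q (- s)"
  define Q where "Q = (1 - fps_const (-s) * fps_X) * (1 - fps_const (q*(-s)) * fps_X :: 'a fps)"
  have Gn: "G $$ n = R (2*n) / P n" for n by (simp add: G_def R_def P_def)
  have scB: "sc (q^2) B = B * Q" unfolding B_def Q_def by (rule sc_two[OF Aq])
  have scG: "sc (q^2) G * Q = G * M"
  proof (rule fps_ext)
    fix n show "(sc (q^2) G * Q) $$ n = (G * M) $$ n"
    proof (cases n)
      case 0 thus ?thesis unfolding Q_def M_def quad_nth by simp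
    next
      case (Suc m)
      show ?thesis
      proof (cases m)
        case 0
        have "q^2 * (R 2 / (1 - q*q)) - (-s + q*(-s)) * 1 = R 2 / (1 - q*q) - (s^2+1) * 1"
          using d1[of 0] unfolding R2 by (simp add: field_simps) (simp add: algebra_simps power2_eq_square)
        thus ?thesis using Suc 0 unfolding Q_def M_def quad_nth(2)[unfolded One_nat_def]
          by (simp add: Gn Pone R01 R23 P_def algebra_simps)
      next
        case (Suc k)
        have c: "R (2*k+4) = (1 + s^2 + s*((q^2)^k*q)*q*(1+q))*R(2*k+2) - s^2*(1 - (q^2)^k*q*q)*(1 - (q^2)^k*q)*R(2*k)"
          unfolding R_def by (rule rs_rec2[OF Aq, of "2*k" s, unfolded xq(1)[of k]])
        have e: "2*(k+2) = 2*k+4" "2*(k+1) = 2*k+2" by simp_all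
        show ?thesis unfolding \<open>n = Suc m\<close> Suc Q_def M_def quad_nth(3) sc_nth Gn pw P2 P1[of k, unfolded Suc_eq_plus1] e
          by (rule alg_even[OF Pnz d1 d2 c])
      qed
    qed
  qed
  have B0: "B $$ 0 = 1" by (simp add: B_def eqat_nth)
  have even: "G = A / B"
    by (rule main_gen[OF Ap scG scB scA M0]) (simp_all add: B0 A0 Gn R01 P_def)
  define G2 where "G2 = Abs_fps (\<lambda>n. rogers_szego (2 * n + 1) s q / qpoch (q\<^sup>2) (q\<^sup>2) n)"
  define B2 where "B2 = e_q_at q (- q * s)"
  define Q2 where "Q2 = (1 - fps_const (-q*s) * fps_X) * (1 - fps_const (q*(-q*s)) * fps_X :: 'a fps)"
  define A2 where "A2 = fps_const (1+s) * A"
  have G2n: "G2 $$ n = R (2*n+1) / P n" for n by (simp add: G2_def R_def P_def)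
  have scB2: "sc (q^2) B2 = B2 * Q2" unfolding B2_def Q2_def by (rule sc_two[OF Aq])
  have scA2: "sc (q^2) A2 = A2 * M"
  proof -
    have "sc (q^2) (fps_const (1+s)) = fps_const (1+s)" by (rule fps_ext) simp
    thus ?thesis unfolding A2_def sc_mult scA by (simp add: mult_ac)
  qed
  have scG2: "sc (q^2) G2 * Q2 = G2 * M"
  proof (rule fps_ext)
    fix n show "(sc (q^2) G2 * Q2) $$ n = (G2 * M) $$ n"
    proof (cases n)
      case 0 thus ?thesis unfolding Q2_def M_def quad_nth by simp
    next
      case (Suc m)
      show ?thesis
      proof (cases m)
        case 0
        have "q^2 * (R 3 / (1 - q*q)) - (-q*s + q*(-q*s)) * (1+s) = R 3 / (1 - q*q) - (s^2+1) * (1+s)"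
          using d1[of 0] unfolding R3 R2 by (simp add: field_simps) (simp add: algebra_simps power2_eq_square)
        thus ?thesis using Suc 0 unfolding Q2_def M_def quad_nth(2)[unfolded One_nat_def]
          by (simp add: G2n Pone R01 R1' R23 P_def algebra_simps)
      next
        case (Suc k)
        have c: "R (2*k+5) = (1 + s^2 + s*((q^2)^k*q*q)*q*(1+q))*R(2*k+3) - s^2*(1 - (q^2)^k*q*q*q)*(1 - (q^2)^k*q*q)*R(2*k+1)"
        proof -
          have i: "2*k+1+4 = 2*k+5" "2*k+1+2 = 2*k+3" by simp_all
          show ?thesis unfolding R_def by (rule rs_rec2[OF Aq, of "2*k+1" s, unfolded xq(2)[of k] i])
        qed
        have e: "2*(k+2)+1 = 2*k+5" "2*(k+1)+1 = 2*k+3" by simp_all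
        show ?thesis unfolding \<open>n = Suc m\<close> Suc Q2_def M_def quad_nth(3) sc_nth G2n pw P2 P1[of k, unfolded Suc_eq_plus1] e
          by (rule alg_odd[OF Pnz d1 d2 c])
      qed
    qed
  qed
  have B20: "B2 $$ 0 = 1" by (simp add: B2_def eqat_nth)
  have odd: "G2 = A2 / B2"
    by (rule main_gen[OF Ap scG2 scB2 scA2 M0]) (simp_all add: B20 A0 A2_def G2n R01 R1' P_def)
  have "A2 / B2 = fps_const (1+s) * (A / B2)"
    unfolding A2_def by (rule fps_divide_times) (simp add: B20 subdegree_eq_0_iff)
  thus ?thesis using even odd unfolding G_def A_def B_def G2_def B2_def by simp
qed


end
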